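(* In the setting of a long-term scheme built from an arbitrary short-term rule $\boldsymbol\wp(\boldsymbol\gamma)$ with threshold $s$ — $\mathbf p_{\rm lt}(\boldsymbol\gamma)=\boldsymbol\wp(\boldsymbol\gamma)$ if $\overline{\boldsymbol\wp(\boldsymbol\gamma)}\le s$ and $\mathbf 0$ otherwise, with long-term average power $P(s)=\mathbb E[\overline{\boldsymbol\wp(\boldsymbol\gamma)}\mathbf 1\{\overline{\boldsymbol\wp(\boldsymbol\gamma)}\le s\}]$ — assume the outage probability satisfies $P_{\rm out}(s):=\Pr(\overline{\boldsymbol\wp(\boldsymbol\gamma)}>s)\doteq\mathcal K s^{-d(R)}$ as $s\to\infty$, for some $\mathcal K>0$ and finite $d(R)>0$, and that $P(s)$ is differentiable. Then: (i) if $d(R)>1$, $\lim_{s\to\infty}P(s)=P_{\rm th}<\infty$, so the outage probability tends to $0$ while the long-term average power stays bounded by $P_{\rm th}$ (long-term exponent $d_{\rm lt}(R)=\infty$); (ii) if $d(R)<1$, then $P(s)\to\infty$ and the long-term exponent \[ d_{\rm lt}(R):=\lim_{s\to\infty}\frac{-\log P_{\rm out}(s)}{\log P(s)} \] equals $\dfrac{d(R)}{1-d(R)}$.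
   Context: $\overline{\mathbf x}=\frac1B\sum_{b=1}^Bx_b$. The rule $\boldsymbol\wp$ is assumed to achieve the target rate $R$ whenever $\overline{\boldsymbol\wp(\boldsymbol\gamma)}\le s$, so outages occur exactly when $\overline{\boldsymbol\wp(\boldsymbol\gamma)}>s$. Exponential equality: $f(s)\doteq Ks^{-d}$ means $\lim_{s\to\infty}f(s)s^d=K$. *)

theory Defs
  imports "HOL-Probability.Probability"
begin

text \<open>Block average of a length-B power vector: overline x = (1/B) * sum_{b=1}^B x_b
  (blocks indexed 0..B-1).\<close>
definition blk_avg :: "nat \<Rightarrow> (nat \<Rightarrow> real) \<Rightarrow> real" where
  "blk_avg B x = (\<Sum>b<B. x b) / real B"

definition p_lt :: "nat \<Rightarrow> ('g \<Rightarrow> nat \<Rightarrow> real) \<Rightarrow> real \<Rightarrow> 'g \<Rightarrow> nat \<Rightarrow> real" where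
  "p_lt B wp s g = (if blk_avg B (wp g) \<le> s then wp g else (\<lambda>_. 0))"

text \<open>Long-term average power P(s) = E[ avg(wp(gamma)) * 1{avg(wp(gamma)) <= s} ].
  The channel state gamma is the identity random variable on the probability space M.\<close>
definition lt_power :: "'g measure \<Rightarrow> nat \<Rightarrow> ('g \<Rightarrow> nat \<Rightarrow> real) \<Rightarrow> real \<Rightarrow> real" where
  "lt_power M B wp s =
     integral\<^sup>L M (\<lambda>g. blk_avg B (wp g) * indicator {x. blk_avg B (wp x) \<le> s} g)"

definition p_out :: "'g measure \<Rightarrow> nat \<Rightarrow> ('g \<Rightarrow> nat \<Rightarrow> real) \<Rightarrow> real \<Rightarrow> real" where
  "p_out M B wp s = measure M {g \<in> space M. blk_avg B (wp g) > s}"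

end

theory Submission
  imports Defs "HOL-Real_Asymp.Real_Asymp"
begin


lemma prob_facts:
  fixes M :: "'g measure" and B :: nat and wp :: "'g \<Rightarrow> nat \<Rightarrow> real"
  assumes "prob_space M"
    and "B > 0"
    and meas: "\<And>b. b < B \<Longrightarrow> (\<lambda>g. wp g b) \<in> borel_measurable M"
    and nn: "\<And>g b. g \<in> space M \<Longrightarrow> b < B \<Longrightarrow> wp g b \<ge> 0"
  shows "\<And>s t. s \<le> t \<Longrightarrow> lt_power M B wp s \<le> lt_power M B wp t"
    and "\<And>s. s > 0 \<Longrightarrow> s/2 * (p_out M B wp (s/2) - p_out M B wp s) \<le> lt_power M B wp s"
    and "\<And>s. s \<ge> 0 \<Longrightarrow> lt_power M B wp s \<le> (\<Sum>k<nat \<lceil>s\<rceil>. p_out M B wp (real k))"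
    and "\<And>s. 0 \<le> p_out M B wp s" "\<And>s. p_out M B wp s \<le> 1"
proof -
  interpret prob_space M by fact
  define X where "X = (\<lambda>g. blk_avg B (wp g))"
  have Xm: "X \<in> borel_measurable M"
    unfolding X_def blk_avg_def by (intro borel_measurable_divide borel_measurable_sum) (auto intro: meas)
  have Xnn: "X g \<ge> 0" if "g \<in> space M" for g
    unfolding X_def blk_avg_def using nn[OF that] by (auto intro!: divide_nonneg_nonneg sum_nonneg)
  have Pdef: "lt_power M B wp s = integral\<^sup>L M (\<lambda>g. X g * indicator {x. X x \<le> s} g)" for s
    unfolding lt_power_def X_def ..
  have Fdef: "p_out M B wp s = measure M {g \<in> space M. X g > s}" for s
    unfolding p_out_def X_def ..
  have indm: "(\<lambda>g. X g * indicator {x. X x \<le> s} g) \<in> borel_measurable M" for s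
  proof -
    have "(\<lambda>g. X g * indicator {x. X x \<le> s} g) = (\<lambda>g. if X g \<le> s then X g else 0)"
      by (auto simp: indicator_def)
    also have "\<dots> \<in> borel_measurable M" using Xm by measurable
    finally show ?thesis .
  qed
  have int: "integrable M (\<lambda>g. X g * indicator {x. X x \<le> s} g)" for s
    apply (rule integrable_const_bound[where B="\<bar>s\<bar>"])
     apply (rule AE_I2) using Xnn apply (auto simp: indicator_def)[1]
    by (rule indm)
  have sets: "{g \<in> space M. X g > s} \<in> sets M" for s using Xm by measurable
  show "\<And>s. 0 \<le> p_out M B wp s" "\<And>s. p_out M B wp s \<le> 1" by (auto simp: Fdef)
  show "lt_power M B wp s \<le> lt_power M B wp t" if "s \<le> t" for s t
    unfolding Pdef using that Xnn by (intro integral_mono int) (auto simp: indicator_def)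
  show "s/2 * (p_out M B wp (s/2) - p_out M B wp s) \<le> lt_power M B wp s" if "s > 0" for s
  proof -
    define A where "A = {g \<in> space M. X g > s/2} - {g \<in> space M. X g > s}"
    have "measure M A = p_out M B wp (s/2) - p_out M B wp s"
      unfolding A_def Fdef using that by (subst finite_measure_Diff[OF sets sets]) auto
    moreover have "integral\<^sup>L M (\<lambda>g. s/2 * indicator A g) = s/2 * measure M A"
      unfolding A_def by (simp add: Int_absorb2 Diff_subset[THEN subset_trans] )
    have Asets: "A \<in> sets M" unfolding A_def by (intro sets.Diff sets)
    have iA: "integrable M (\<lambda>g. s/2 * indicator A g)"
      using Asets by (intro integrable_mult_right integrable_real_indicator) (auto simp: less_top[symmetric])
    moreover have "integral\<^sup>L M (\<lambda>g. s/2 * indicator A g) \<le> lt_power M B wp s"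
      unfolding Pdef using that Xnn
      by (intro integral_mono int iA) (auto simp: indicator_def A_def)
    ultimately show ?thesis using Asets by (simp add: Int_absorb2 sets.sets_into_space)
  qed
  show "lt_power M B wp s \<le> (\<Sum>k<nat \<lceil>s\<rceil>. p_out M B wp (real k))" if "s \<ge> 0" for s
  proof -
    let ?N = "nat \<lceil>s\<rceil>"
    have pw: "X g * indicator {x. X x \<le> s} g \<le> (\<Sum>k<?N. indicator {g \<in> space M. X g > real k} g)"
      if g: "g \<in> space M" for g
    proof (cases "X g \<le> s")
      case False then show ?thesis by (auto intro!: sum_nonneg)
    next
      case True
      define j where "j = nat \<lceil>X g\<rceil>"
      have jN: "j \<le> ?N" unfolding j_def using True by (intro nat_mono ceiling_mono)
      have "X g \<le> real j" unfolding j_def using Xnn[OF g] by linarith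
      also have "real j = (\<Sum>k<j. indicator {g \<in> space M. X g > real k} g)"
      proof -
        have "(\<Sum>k<j. indicator {g \<in> space M. X g > real k} g) = (\<Sum>k<j. (1::real))"
        proof (intro sum.cong refl)
          fix k assume "k \<in> {..<j}"
          then have "int k < \<lceil>X g\<rceil>" unfolding j_def by auto
          then have "real k < X g" by (simp add: less_ceiling_iff)
          then show "indicator {g \<in> space M. X g > real k} g = (1::real)" using g by auto
        qed
        then show ?thesis by simp
      qed
      also have "\<dots> \<le> (\<Sum>k<?N. indicator {g \<in> space M. X g > real k} g)"
        using jN by (intro sum_mono2) auto
      finally have le: "X g \<le> (\<Sum>k<?N. indicator {g \<in> space M. X g > real k} g)" .
      have "indicator {x. X x \<le> s} g = (1::real)" using True by simp
      then show ?thesis using le by (simp only: mult_1_right)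
    qed
    have "lt_power M B wp s \<le> integral\<^sup>L M (\<lambda>g. \<Sum>k<?N. indicator {g \<in> space M. X g > real k} g)"
      unfolding Pdef using pw sets by (intro integral_mono int) (auto intro!: integrable_sum integrable_real_indicator simp: less_top[symmetric])
    also have "\<dots> = (\<Sum>k<?N. p_out M B wp (real k))"
      using sets by (subst Bochner_Integration.integral_sum) (auto simp: Fdef less_top[symmetric] intro!: integrable_real_indicator sum.cong)
    finally show ?thesis .
  qed
qed


lemma step_ineq:
  fixes e :: real assumes e: "0 < e" "e < 1"
  shows "e * (real n + 1) powr (e - 1) \<le> (real n + 1) powr e - real n powr e"
proof (cases "n = 0")
  case True then show ?thesis using e by simp
next
  case False
  then have n: "real n > 0" by simp
  have "\<exists>z>real n. z < real n + 1 \<and> (real n + 1) powr e - real n powr e = ((real n + 1) - real n) * (e * z powr (e - 1))"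
    using n by (intro MVT2) (auto intro!: has_real_derivative_powr)
  then obtain z where z: "z > real n" "z < real n + 1"
    and eq: "(real n + 1) powr e - real n powr e = e * z powr (e - 1)" by auto
  have "(real n + 1) powr (e - 1) \<le> z powr (e - 1)"
    using z n e by (intro powr_mono2') auto
  then show ?thesis using eq e by (simp add: mult_left_mono)
qed

lemma sum_powr_bound:
  fixes e :: real assumes e: "0 < e" "e < 1"
  shows "(\<Sum>k<Suc n. real k powr (e - 1)) \<le> real n powr e / e"
proof (induction n)
  case 0 then show ?case by simp
next
  case (Suc n)
  have "(\<Sum>k<Suc (Suc n). real k powr (e - 1)) = (\<Sum>k<Suc n. real k powr (e - 1)) + (real n + 1) powr (e - 1)"
    by (simp add: add.commute)
  also have "\<dots> \<le> real n powr e / e + (real n + 1) powr (e - 1)" using Suc by simp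
  also have "\<dots> = (real n powr e + e * (real n + 1) powr (e - 1)) / e"
    using e by (simp add: field_simps)
  also have "\<dots> \<le> ((real n + 1) powr e) / e"
    using step_ineq[OF e, of n] e by (intro divide_right_mono) auto
  also have "\<dots> = real (Suc n) powr e / e" by (simp add: add.commute)
  finally show ?case .
qed

lemma min_sum: "(\<Sum>k<N. if k < M then 1 else 0::real) = real (min N M)"
  by (induction N) (auto simp: min_def)

lemma upper_common:
  fixes F P :: "real \<Rightarrow> real" and K d :: real
  assumes F0: "\<And>s. 0 \<le> F s" and F1: "\<And>s. F s \<le> 1"
    and upper: "\<And>s. s \<ge> 0 \<Longrightarrow> P s \<le> (\<Sum>k<nat \<lceil>s\<rceil>. F (real k))"
    and K: "K > 0" and d: "d > 0"
    and lim: "((\<lambda>s. F s * s powr d) \<longlongrightarrow> K) at_top"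
  shows "\<exists>M::nat. \<forall>s\<ge>0. P s \<le> real M + 2*K*(\<Sum>k<nat \<lceil>s\<rceil>. real k powr (-d))"
proof -
  have "eventually (\<lambda>s. F s * s powr d < 2*K) at_top" using order_tendstoD(2)[OF lim] K by auto
  then obtain S0 where S0: "\<And>s. s \<ge> S0 \<Longrightarrow> F s * s powr d < 2*K"
    by (auto simp: eventually_at_top_linorder)
  define M where "M = nat \<lceil>max S0 1\<rceil>"
  have Fk: "F (real k) \<le> (if k < M then 1 else 0) + 2*K*real k powr (-d)" for k
  proof (cases "k < M")
    case True
    have "0 \<le> 2*K*real k powr (-d)" using K by simp
    then show ?thesis using F1[of k] True by simp
  next
    case False
    then have "real k \<ge> max S0 1" unfolding M_def by linarith
    then have k: "real k \<ge> S0" "real k > 0" by auto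
    have "F k * real k powr d < 2*K" using S0 k by auto
    then have "F k < 2*K / real k powr d" using k by (simp add: field_simps)
    then show ?thesis using False by (simp add: powr_minus_divide)
  qed
  show ?thesis
  proof (intro exI allI impI)
    fix s :: real assume s: "s \<ge> 0"
    have "P s \<le> (\<Sum>k<nat \<lceil>s\<rceil>. F (real k))" using upper s by auto
    also have "\<dots> \<le> (\<Sum>k<nat \<lceil>s\<rceil>. (if k < M then 1 else 0) + 2*K*real k powr (-d))"
      by (intro sum_mono Fk)
    also have "\<dots> = real (min (nat \<lceil>s\<rceil>) M) + 2*K*(\<Sum>k<nat \<lceil>s\<rceil>. real k powr (-d))"
      by (simp add: sum.distrib sum_distrib_left min_sum)
    also have "\<dots> \<le> real M + 2*K*(\<Sum>k<nat \<lceil>s\<rceil>. real k powr (-d))" by simp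
    finally show "P s \<le> real M + 2*K*(\<Sum>k<nat \<lceil>s\<rceil>. real k powr (-d))" .
  qed
qed

lemma case_big:
  fixes F P :: "real \<Rightarrow> real" and K d :: real
  assumes F0: "\<And>s. 0 \<le> F s" and F1: "\<And>s. F s \<le> 1"
    and mono: "\<And>s t. s \<le> t \<Longrightarrow> P s \<le> P t"
    and upper: "\<And>s. s \<ge> 0 \<Longrightarrow> P s \<le> (\<Sum>k<nat \<lceil>s\<rceil>. F (real k))"
    and K: "K > 0" and d: "d > 1"
    and lim: "((\<lambda>s. F s * s powr d) \<longlongrightarrow> K) at_top"
  shows "(\<exists>Pth. (P \<longlongrightarrow> Pth) at_top) \<and> (F \<longlongrightarrow> 0) at_top"
proof
  obtain M :: nat where M: "\<And>s. s \<ge> 0 \<Longrightarrow> P s \<le> real M + 2*K*(\<Sum>k<nat \<lceil>s\<rceil>. real k powr (-d))"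
    using upper_common[OF F0 F1 upper K _ lim] d by auto
  have summ: "summable (\<lambda>k. real k powr (-d))" using d by (simp add: summable_real_powr_iff)
  define Bd where "Bd = real M + 2*K * suminf (\<lambda>k. real k powr (-d))"
  have bnd: "P s \<le> Bd" for s
  proof -
    have "P s \<le> P (max s 0)" by (intro mono) auto
    also have "\<dots> \<le> real M + 2*K*(\<Sum>k<nat \<lceil>max s 0\<rceil>. real k powr (-d))" by (intro M) auto
    also have "\<dots> \<le> Bd" unfolding Bd_def using K
      by (intro add_left_mono mult_left_mono sum_le_suminf summ) auto
    finally show ?thesis .
  qed
  have bdd: "bdd_above (range P)" using bnd by (intro bdd_aboveI2) auto
  show "\<exists>Pth. (P \<longlongrightarrow> Pth) at_top"
  proof (intro exI order_tendstoI)
    fix a assume "a < (SUP s. P s)"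
    then obtain x where "a < P x" using less_cSUP_iff[OF _ bdd] by auto
    then show "eventually (\<lambda>s. a < P s) at_top"
      unfolding eventually_at_top_linorder by (intro exI[of _ x]) (auto intro: less_le_trans mono)
  next
    fix b assume "(SUP s. P s) < b"
    then show "eventually (\<lambda>s. P s < b) at_top"
      using cSUP_upper[OF _ bdd] by (intro always_eventually allI) (auto intro: le_less_trans)
  qed
  have "((\<lambda>s. (F s * s powr d) * s powr (-d)) \<longlongrightarrow> K * 0) at_top"
    using d by (intro tendsto_mult lim tendsto_neg_powr filterlim_ident) auto
  moreover have "eventually (\<lambda>s. (F s * s powr d) * s powr (-d) = F s) at_top"
    using eventually_gt_at_top[of 0] by eventually_elim (simp add: powr_minus field_simps)
  ultimately show "(F \<longlongrightarrow> 0) at_top" by (simp add: tendsto_cong)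
qed

lemma case_small:
  fixes F P :: "real \<Rightarrow> real" and K d :: real
  assumes F0: "\<And>s. 0 \<le> F s" and F1: "\<And>s. F s \<le> 1"
    and mono: "\<And>s t. s \<le> t \<Longrightarrow> P s \<le> P t"
    and lower: "\<And>s. s > 0 \<Longrightarrow> s/2 * (F (s/2) - F s) \<le> P s"
    and upper: "\<And>s. s \<ge> 0 \<Longrightarrow> P s \<le> (\<Sum>k<nat \<lceil>s\<rceil>. F (real k))"
    and K: "K > 0" and d0: "d > 0" and d1: "d < 1"
    and lim: "((\<lambda>s. F s * s powr d) \<longlongrightarrow> K) at_top"
  shows "filterlim P at_top at_top \<and>
         ((\<lambda>s. - ln (F s) / ln (P s)) \<longlongrightarrow> d / (1 - d)) at_top"
proof -
  define e where "e = 1 - d"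
  have e: "0 < e" "e < 1" using d0 d1 unfolding e_def by auto
  obtain M :: nat where M: "\<And>s. s \<ge> 0 \<Longrightarrow> P s \<le> real M + 2*K*(\<Sum>k<nat \<lceil>s\<rceil>. real k powr (-d))"
    using upper_common[OF F0 F1 upper K d0 lim] by auto
  define c2 where "c2 = real M + 4*K/e"
  have c2: "c2 > 0" unfolding c2_def using K e by (simp add: add_nonneg_pos)
  have up2: "P s \<le> c2 * s powr e" if s: "s \<ge> 1" for s
  proof -
    define N where "N = nat \<lceil>s\<rceil>"
    have "(\<Sum>k<N. real k powr (-d)) \<le> (\<Sum>k<Suc N. real k powr (e - 1))"
      unfolding e_def by simp
    also have "\<dots> \<le> real N powr e / e" by (rule sum_powr_bound[OF e])
    also have "\<dots> \<le> 2 * s powr e / e"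
    proof -
      have "real N \<le> 2 * s" unfolding N_def using s by linarith
      then have "real N powr e \<le> (2 * s) powr e" using e by (intro powr_mono2) auto
      also have "\<dots> = 2 powr e * s powr e" using s by (simp add: powr_mult)
      also have "\<dots> \<le> 2 * s powr e"
      proof -
        have "2 powr e \<le> 2 powr (1::real)" using e by (intro powr_mono) auto
        then show ?thesis by (intro mult_right_mono) auto
      qed
      finally show ?thesis using e by (intro divide_right_mono) auto
    qed
    finally have S: "(\<Sum>k<N. real k powr (-d)) \<le> 2 * s powr e / e" .
    have ge1: "s powr e \<ge> 1" using s e by (simp add: ge_one_powr_ge_zero)
    have "P s \<le> real M + 2*K*(\<Sum>k<N. real k powr (-d))" unfolding N_def using s by (intro M) auto
    also have "\<dots> \<le> real M + 2*K*(2 * s powr e / e)" using S K by (intro add_left_mono mult_left_mono) auto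
    also have "\<dots> \<le> real M * s powr e + 4*K/e * s powr e"
      using ge1 mult_left_mono[OF ge1, of "real M"] by simp
    also have "\<dots> = c2 * s powr e" unfolding c2_def by (simp add: algebra_simps)
    finally show ?thesis .
  qed
  define c1 where "c1 = (2 powr d - 1) * K / 4"
  have pd: "2 powr d > 1" using d0 powr_less_mono[of 0 d 2] by simp 
  have c1: "c1 > 0" unfolding c1_def using pd K by simp
  have lim2: "((\<lambda>s. F (s/2) * (s/2) powr d) \<longlongrightarrow> K) at_top"
    by (rule filterlim_compose[OF lim]) real_asymp
  have "((\<lambda>s. 2 powr d * (F (s/2) * (s/2) powr d) - F s * s powr d) \<longlongrightarrow> 2 powr d * K - K) at_top"
    by (intro tendsto_intros lim2 lim)
  moreover have "2 powr d * K - K > (2 powr d - 1) * K / 2" using mult_strict_left_mono[OF pd K] by (simp add: field_simps)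
  ultimately have ev1: "eventually (\<lambda>s. 2 powr d * (F (s/2) * (s/2) powr d) - F s * s powr d > (2 powr d - 1) * K / 2) at_top"
    by (rule order_tendstoD(1))
  have low2: "eventually (\<lambda>s. c1 * s powr e \<le> P s) at_top"
    using ev1 eventually_gt_at_top[of 0]
  proof eventually_elim
    case (elim s)
    have sd: "s powr d > 0" using elim by simp
    have "2 powr d * (F (s/2) * (s/2) powr d) - F s * s powr d = (F (s/2) - F s) * s powr d"
      using elim by (simp add: powr_divide algebra_simps)
    with elim have h: "(F (s/2) - F s) * s powr d > (2 powr d - 1) * K / 2" by simp
    have se: "s powr e = s / s powr d" unfolding e_def using elim by (simp add: powr_diff)
    have "c1 * s powr e = ((2 powr d - 1) * K / 2) * s / s powr d / 2" unfolding c1_def se by simp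
    also have "\<dots> \<le> ((F (s/2) - F s) * s powr d) * s / s powr d / 2"
      using h elim sd by (intro divide_right_mono mult_right_mono) auto
    also have "\<dots> = s/2 * (F (s/2) - F s)" using sd by (simp add: field_simps)
    also have "\<dots> \<le> P s" using lower elim by auto
    finally show ?case .
  qed
  have Pinf: "filterlim P at_top at_top"
    by (rule filterlim_at_top_mono[OF filterlim_tendsto_pos_mult_at_top[OF tendsto_const c1 real_powr_at_top[OF e(1)]] low2])
  have "eventually (\<lambda>s. F s * s powr d > K/2) at_top" by (rule order_tendstoD(1)[OF lim]) (use K in simp)
  then have Fpos: "eventually (\<lambda>s. F s > 0) at_top"
  proof eventually_elim
    case (elim s) show ?case using elim K F0[of s] by (cases "F s = 0") auto
  qed
  define a where "a = (\<lambda>s. ln (F s * s powr d))"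
  define b where "b = (\<lambda>s. ln (P s / s powr e))"
  have Linf: "filterlim (\<lambda>s::real. ln s) at_infinity at_top"
    by (rule filterlim_at_top_imp_at_infinity[OF ln_at_top])
  have lima: "((\<lambda>s. a s / ln s) \<longlongrightarrow> 0) at_top"
    unfolding a_def using K by (intro tendsto_divide_0[OF tendsto_ln[OF lim] Linf]) auto
  have limb: "((\<lambda>s. b s / ln s) \<longlongrightarrow> 0) at_top"
  proof (rule tendsto_sandwich[OF _ _ tendsto_divide_0[OF tendsto_const Linf] tendsto_divide_0[OF tendsto_const Linf]])
    show "eventually (\<lambda>s. ln c1 / ln s \<le> b s / ln s) at_top"
      using low2 eventually_gt_at_top[of 1]
    proof eventually_elim
      case (elim s)
      have "c1 \<le> P s / s powr e" using elim by (simp add: field_simps)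
      then have "ln c1 \<le> b s" unfolding b_def using c1 by simp
      then show ?case using elim by (intro divide_right_mono) auto
    qed
    show "eventually (\<lambda>s. b s / ln s \<le> ln c2 / ln s) at_top"
      using low2 eventually_ge_at_top[of 1] eventually_gt_at_top[of 1]
    proof eventually_elim
      case (elim s)
      have pp: "P s / s powr e > 0" using elim c1 by (smt (verit) divide_pos_pos mult_pos_pos powr_gt_zero)
      have "P s / s powr e \<le> c2" using up2[of s] elim by (simp add: field_simps)
      then have "b s \<le> ln c2" unfolding b_def using pp by simp
      then show ?case using elim by (intro divide_right_mono) auto
    qed
  qed
  have "((\<lambda>s. (d - a s / ln s) / (e + b s / ln s)) \<longlongrightarrow> (d - 0) / (e + 0)) at_top"
    using e by (intro tendsto_intros lima limb) auto
  moreover have "eventually (\<lambda>s. (d - a s / ln s) / (e + b s / ln s) = - ln (F s) / ln (P s)) at_top"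
    using low2 Fpos eventually_gt_at_top[of 1]
  proof eventually_elim
    case (elim s)
    have Pp: "P s > 0" using elim c1 by (smt (verit) mult_pos_pos powr_gt_zero)
    have L: "ln s > 0" using elim by simp
    have "a s = ln (F s) + d * ln s" unfolding a_def using elim by (simp add: ln_mult ln_powr)
    moreover have "b s = ln (P s) - e * ln s" unfolding b_def using elim Pp by (simp add: ln_div ln_powr)
    ultimately show ?case using L by (simp add: field_simps)
  qed
  ultimately have "((\<lambda>s. - ln (F s) / ln (P s)) \<longlongrightarrow> d / e) at_top"
    by (simp add: tendsto_cong)
  then show ?thesis using Pinf unfolding e_def by simp
qed



theorem theorem6:
  fixes M :: "'g measure" and B :: nat and wp :: "'g \<Rightarrow> nat \<Rightarrow> real"
    and K d :: real
  assumes "prob_space M"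
    and "B > 0"
    and "\<And>b. b < B \<Longrightarrow> (\<lambda>g. wp g b) \<in> borel_measurable M"
    and "\<And>g b. g \<in> space M \<Longrightarrow> b < B \<Longrightarrow> wp g b \<ge> 0"
    and "K > 0" and "d > 0"
    and "((\<lambda>s. p_out M B wp s * s powr d) \<longlongrightarrow> K) at_top"
    and "\<And>s. s > 0 \<Longrightarrow> lt_power M B wp differentiable (at s)"
  shows "(d > 1 \<longrightarrow>
            (\<exists>Pth. (lt_power M B wp \<longlongrightarrow> Pth) at_top) \<and>
            (p_out M B wp \<longlongrightarrow> 0) at_top)
       \<and> (d < 1 \<longrightarrow>
            filterlim (lt_power M B wp) at_top at_top \<and>
            ((\<lambda>s. - ln (p_out M B wp s) / ln (lt_power M B wp s)) \<longlongrightarrow> d / (1 - d)) at_top)"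
  proof -
  note pf = prob_facts[OF assms(1-4)]
  show ?thesis
  proof (intro conjI impI)
    assume "d > 1"
    note cb = case_big[OF pf(4) pf(5) pf(1) pf(3) assms(5) this assms(7)]
    show "\<exists>Pth. (lt_power M B wp \<longlongrightarrow> Pth) at_top" using cb by blast
    show "(p_out M B wp \<longlongrightarrow> 0) at_top" using cb by blast
  next
    assume d1: "d < 1"
    note cs = case_small[OF pf(4) pf(5) pf(1) pf(2) pf(3) assms(5) assms(6) d1 assms(7)]
    show "filterlim (lt_power M B wp) at_top at_top" using cs by blast
    show "((\<lambda>s. - ln (p_out M B wp s) / ln (lt_power M B wp s)) \<longlongrightarrow> d / (1 - d)) at_top"
      using cs by blast
  qed
qed

end
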